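(* Let $n\ge1$ be an integer. For each $k\in[n]$ let $G_k$ be a graph with perfect state transfer from vertex $a_k$ to vertex $b_k$ at a common time $t$ (when $a_k=b_k$ this means $G_k$ is periodic at $a_k$ at time $t>0$), where $a_k\neq b_k$ for at least one $k$. For each $k$, let $\pi_k$ be an equitable partition of $G_k$ in which $a_k$ and $b_k$ lie in singleton cells, with normalized partition matrix $Q_k$. Let $\pi$ be the equitable partition of $\square_{k}G_k$ with normalized partition matrix $\bigotimes_k Q_k$. Then \[ \square_{k=1}^n (G_k/\pi_k)\;\cong\;\Big(\square_{k=1}^n G_k\Big)/\pi, \] and this graph has perfect state transfer between (the cells of) $(a_1,\dots,a_n)$ and $(b_1,\dots,b_n)$ at time $t$.
   Context: Graphs are finite and undirected with adjacency matrix $A$; a graph has perfect state transfer from $u$ to $v$ at time $t$ if $|\langle v|e^{-itA}|u\rangle|=1$, where $|u\rangle$ is the standard basis vector of $u$; it is periodic at $u$ if this holds with $v=u$ for some $t>0$. The Cartesian product has adjacency matrix $A(G)\otimes I+I\otimes A(H)$. A partition $V_1\uplus\cdots\uplus V_m$ is equitable if each vertex of $V_j$ has a constant number $d_{j,k}$ of neighbours in $V_k$; the normalized partition matrix is $Q_{x,j}=|V_j|^{-1/2}[x\in V_j]$; the quotient $G/\pi$ is the weighted graph on the cells with adjacency matrix $Q^TA(G)Q$ (entries $\sqrt{d_{j,k}d_{k,j}}$). *)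

theory Defs
  imports Complex_Main
begin

definition simple_graph :: "'a set \<Rightarrow> ('a \<Rightarrow> 'a \<Rightarrow> bool) \<Rightarrow> bool" where
  "simple_graph V E \<longleftrightarrow> finite V \<and> V \<noteq> {} \<and>
     (\<forall>x y. E x y \<longrightarrow> x \<in> V \<and> y \<in> V) \<and>
     (\<forall>x y. E x y \<longrightarrow> E y x) \<and> (\<forall>x. \<not> E x x)"

definition adj :: "('a \<Rightarrow> 'a \<Rightarrow> bool) \<Rightarrow> 'a \<Rightarrow> 'a \<Rightarrow> real" where
  "adj E x y = (if E x y then 1 else 0)"

fun mpow :: "'v set \<Rightarrow> ('v \<Rightarrow> 'v \<Rightarrow> real) \<Rightarrow> nat \<Rightarrow> 'v \<Rightarrow> 'v \<Rightarrow> real" where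
  "mpow S A 0 x y = (if x = y then 1 else 0)"
| "mpow S A (Suc m) x y = (\<Sum>z\<in>S. A x z * mpow S A m z y)"

text \<open>The entry  < v | exp(-itA) | u >  of the transition matrix (entrywise exponential series).\<close>
definition transition :: "'v set \<Rightarrow> ('v \<Rightarrow> 'v \<Rightarrow> real) \<Rightarrow> real \<Rightarrow> 'v \<Rightarrow> 'v \<Rightarrow> complex" where
  "transition S A t u v = (\<Sum>m. (- \<i> * complex_of_real t) ^ m / of_nat (fact m) * complex_of_real (mpow S A m v u))"

definition pst :: "'v set \<Rightarrow> ('v \<Rightarrow> 'v \<Rightarrow> real) \<Rightarrow> 'v \<Rightarrow> 'v \<Rightarrow> real \<Rightarrow> bool" where
  "pst S A u v t \<longleftrightarrow> u \<in> S \<and> v \<in> S \<and> cmod (transition S A t u v) = 1"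

definition is_partition :: "'a set \<Rightarrow> 'a set set \<Rightarrow> bool" where
  "is_partition V P \<longleftrightarrow> (\<forall>C\<in>P. C \<noteq> {}) \<and> \<Union>P = V \<and>
     (\<forall>C\<in>P. \<forall>D\<in>P. C \<noteq> D \<longrightarrow> C \<inter> D = {})"

definition equitable :: "'a set \<Rightarrow> ('a \<Rightarrow> 'a \<Rightarrow> real) \<Rightarrow> 'a set set \<Rightarrow> bool" where
  "equitable V A P \<longleftrightarrow> is_partition V P \<and>
     (\<forall>C\<in>P. \<forall>D\<in>P. \<forall>x\<in>C. \<forall>y\<in>C. (\<Sum>z\<in>D. A x z) = (\<Sum>z\<in>D. A y z))"

text \<open>Quotient adjacency matrix Q^T A Q (Q the normalized partition matrix), on the cells.\<close>
definition qadj :: "('a \<Rightarrow> 'a \<Rightarrow> real) \<Rightarrow> 'a set \<Rightarrow> 'a set \<Rightarrow> real" where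
  "qadj A C D = (\<Sum>x\<in>C. \<Sum>y\<in>D. A x y) / sqrt (real (card C) * real (card D))"

text \<open>Cartesian product of n weighted graphs (Vs k, As k), k < n; vertices are lists of length n.\<close>
definition cp_verts :: "nat \<Rightarrow> (nat \<Rightarrow> 'v set) \<Rightarrow> 'v list set" where
  "cp_verts n Vs = {xs. length xs = n \<and> (\<forall>k<n. xs ! k \<in> Vs k)}"

definition cp_adj :: "nat \<Rightarrow> (nat \<Rightarrow> 'v \<Rightarrow> 'v \<Rightarrow> real) \<Rightarrow> 'v list \<Rightarrow> 'v list \<Rightarrow> real" where
  "cp_adj n As xs ys = (\<Sum>k<n. if (\<forall>j<n. j \<noteq> k \<longrightarrow> xs ! j = ys ! j) then As k (xs ! k) (ys ! k) else 0)"

text \<open>Product cell C_1 x ... x C_n, and the product partition pi (normalized matrix = Kronecker product of the Q_k).\<close>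
definition prod_cell :: "nat \<Rightarrow> 'a set list \<Rightarrow> 'a list set" where
  "prod_cell n Cs = {xs. length xs = n \<and> (\<forall>k<n. xs ! k \<in> Cs ! k)}"

definition prod_partition :: "nat \<Rightarrow> (nat \<Rightarrow> 'a set set) \<Rightarrow> 'a list set set" where
  "prod_partition n P = prod_cell n ` cp_verts n P"

end

theory Submission
  imports Defs
begin

lemma mpow_bound:
  assumes "finite S" "x \<in> S"
  shows "\<bar>mpow S A m x y\<bar> \<le> (1 + (\<Sum>x\<in>S. \<Sum>z\<in>S. \<bar>A x z\<bar>)) ^ m"
  using assms(2)
proof (induction m arbitrary: x)
  case 0 then show ?case by simp
next
  case (Suc m)
  define M where "M = 1 + (\<Sum>x\<in>S. \<Sum>z\<in>S. \<bar>A x z\<bar>)"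
  have M0: "M \<ge> 0" unfolding M_def by (simp add: sum_nonneg add_nonneg_nonneg)
  have rowle: "(\<Sum>z\<in>S. \<bar>A x z\<bar>) \<le> M"
  proof -
    have "(\<Sum>z\<in>S. \<bar>A x z\<bar>) \<le> (\<Sum>x\<in>S. \<Sum>z\<in>S. \<bar>A x z\<bar>)"
      using member_le_sum[of x S "\<lambda>x. \<Sum>z\<in>S. \<bar>A x z\<bar>"] Suc.prems assms(1)
      by (simp add: sum_nonneg)
    then show ?thesis unfolding M_def by linarith
  qed
  have "\<bar>mpow S A (Suc m) x y\<bar> \<le> (\<Sum>z\<in>S. \<bar>A x z\<bar> * \<bar>mpow S A m z y\<bar>)"
    by (simp add: abs_mult[symmetric] sum_abs)
  also have "\<dots> \<le> (\<Sum>z\<in>S. \<bar>A x z\<bar> * M ^ m)"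
    by (rule sum_mono) (use Suc.IH M_def in \<open>auto intro: mult_left_mono\<close>)
  also have "\<dots> = (\<Sum>z\<in>S. \<bar>A x z\<bar>) * M ^ m" by (simp add: sum_distrib_right)
  also have "\<dots> \<le> M * M ^ m" by (rule mult_right_mono[OF rowle]) (simp add: M0)
  finally show ?case unfolding M_def by simp
qed

lemma trans_summable:
  assumes "finite S" "v \<in> S"
  shows "summable (\<lambda>m. norm ((- \<i> * complex_of_real t) ^ m / of_nat (fact m) * complex_of_real (mpow S A m v u)))"
proof -
  define M where "M = 1 + (\<Sum>x\<in>S. \<Sum>z\<in>S. \<bar>A x z\<bar>)"
  show ?thesis
  proof (rule summable_comparison_test[OF _ summable_exp[of "\<bar>t\<bar> * M"]], intro exI allI impI)
    fix m :: nat
    have "norm (norm ((- \<i> * complex_of_real t) ^ m / of_nat (fact m) * complex_of_real (mpow S A m v u)))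
        = \<bar>t\<bar> ^ m / fact m * \<bar>mpow S A m v u\<bar>"
      by (simp add: norm_mult norm_divide norm_power)
    also have "\<dots> \<le> \<bar>t\<bar> ^ m / fact m * M ^ m"
      by (rule mult_left_mono) (use mpow_bound[OF assms, of A m u] M_def in auto)
    also have "\<dots> = inverse (fact m) * (\<bar>t\<bar> * M) ^ m" by (simp add: power_mult_distrib field_simps)
    finally show "norm (norm ((- \<i> * complex_of_real t) ^ m / of_nat (fact m) * complex_of_real (mpow S A m v u)))
        \<le> inverse (fact m) * (\<bar>t\<bar> * M) ^ m" .
  qed
qed

lemma pascal_conv:
  fixes \<alpha> \<beta> :: "nat \<Rightarrow> real"
  shows "(\<Sum>j\<le>m. real (m choose j) * \<alpha> (Suc j) * \<beta> (m-j)) + (\<Sum>j\<le>m. real (m choose j) * \<alpha> j * \<beta> (Suc m - j))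
       = (\<Sum>j\<le>Suc m. real (Suc m choose j) * \<alpha> j * \<beta> (Suc m - j))"
proof -
  have "(\<Sum>j\<le>Suc m. real (Suc m choose j) * \<alpha> j * \<beta> (Suc m - j))
      = \<alpha> 0 * \<beta> (Suc m) + (\<Sum>j\<le>m. real (Suc m choose Suc j) * \<alpha> (Suc j) * \<beta> (m - j))"
    by (subst sum.atMost_Suc_shift) simp
  also have "\<dots> = \<alpha> 0 * \<beta> (Suc m) + (\<Sum>j\<le>m. real (m choose Suc j) * \<alpha> (Suc j) * \<beta> (m - j))
      + (\<Sum>j\<le>m. real (m choose j) * \<alpha> (Suc j) * \<beta> (m-j))"
    by (simp add: sum.distrib algebra_simps)
  also have "\<alpha> 0 * \<beta> (Suc m) + (\<Sum>j\<le>m. real (m choose Suc j) * \<alpha> (Suc j) * \<beta> (m - j))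
      = (\<Sum>j\<le>Suc m. real (m choose j) * \<alpha> j * \<beta> (Suc m - j))"
    by (subst sum.atMost_Suc_shift[of _ m]) simp
  also have "\<dots> = (\<Sum>j\<le>m. real (m choose j) * \<alpha> j * \<beta> (Suc m - j))"
    by simp
  finally show ?thesis by simp
qed

definition pa :: "('u \<Rightarrow> 'u \<Rightarrow> real) \<Rightarrow> ('w \<Rightarrow> 'w \<Rightarrow> real) \<Rightarrow> 'u \<times> 'w \<Rightarrow> 'u \<times> 'w \<Rightarrow> real" where
  "pa A B p q = A (fst p) (fst q) * (if snd p = snd q then 1 else 0) + (if fst p = fst q then 1 else 0) * B (snd p) (snd q)"

lemma mpow_pair:
  assumes "finite S" "finite T" "x \<in> S" "u \<in> T"
  shows "mpow (S \<times> T) (pa A B) m (x,u) (y,v) = (\<Sum>j\<le>m. real (m choose j) * mpow S A j x y * mpow T B (m-j) u v)"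
  using assms(3,4)
proof (induction m arbitrary: x u)
  case 0 then show ?case by simp
next
  case (Suc m)
  have "mpow (S \<times> T) (pa A B) (Suc m) (x,u) (y,v)
      = (\<Sum>z\<in>S. \<Sum>w\<in>T. pa A B (x,u) (z,w) * mpow (S \<times> T) (pa A B) m (z,w) (y,v))"
    by (simp add: sum.cartesian_product)
  also have "\<dots> = (\<Sum>z\<in>S. \<Sum>w\<in>T. (A x z * (if u = w then 1 else 0)) * mpow (S \<times> T) (pa A B) m (z,w) (y,v))
     + (\<Sum>z\<in>S. \<Sum>w\<in>T. ((if x = z then 1 else 0) * B u w) * mpow (S \<times> T) (pa A B) m (z,w) (y,v))"
    by (simp add: pa_def sum.distrib distrib_right)
  also have "\<dots> = (\<Sum>z\<in>S. A x z * mpow (S \<times> T) (pa A B) m (z,u) (y,v))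
     + (\<Sum>w\<in>T. B u w * mpow (S \<times> T) (pa A B) m (x,w) (y,v))"
    using Suc.prems assms(1,2)
    by (simp add: if_distrib if_distribR sum.If_cases sum.swap[of _ S T] cong: if_cong)
  also have "\<dots> = (\<Sum>z\<in>S. A x z * (\<Sum>j\<le>m. real (m choose j) * mpow S A j z y * mpow T B (m-j) u v))
     + (\<Sum>w\<in>T. B u w * (\<Sum>j\<le>m. real (m choose j) * mpow S A j x y * mpow T B (m-j) w v))"
    using Suc by simp
  also have "\<dots> = (\<Sum>j\<le>m. real (m choose j) * mpow S A (Suc j) x y * mpow T B (m-j) u v)
     + (\<Sum>j\<le>m. real (m choose j) * mpow S A j x y * mpow T B (Suc (m-j)) u v)"
    by (simp add: sum_distrib_left sum_distrib_right sum.swap[of _ S] sum.swap[of _ T] algebra_simps)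
  also have "\<dots> = (\<Sum>j\<le>m. real (m choose j) * mpow S A (Suc j) x y * mpow T B (m-j) u v)
     + (\<Sum>j\<le>m. real (m choose j) * mpow S A j x y * mpow T B (Suc m - j) u v)"
    by (intro arg_cong2[where f="(+)"] refl sum.cong) (auto simp: Suc_diff_le)
  also have "\<dots> = (\<Sum>j\<le>Suc m. real (Suc m choose j) * mpow S A j x y * mpow T B (Suc m - j) u v)"
    by (rule pascal_conv[of m "\<lambda>j. mpow S A j x y" "\<lambda>j. mpow T B j u v"])
  finally show ?case .
qed

lemma transition_pair:
  assumes "finite S" "finite T" "y \<in> S" "v \<in> T"
  shows "transition (S \<times> T) (pa A B) t (x,u) (y,v) = transition S A t x y * transition T B t u v"
proof -
  define c where "c = - \<i> * complex_of_real t"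
  define a where "a = (\<lambda>m. c ^ m / of_nat (fact m) * complex_of_real (mpow S A m y x))"
  define b where "b = (\<lambda>m. c ^ m / of_nat (fact m) * complex_of_real (mpow T B m v u))"
  have sa: "summable (\<lambda>m. norm (a m))" unfolding a_def c_def by (rule trans_summable[OF assms(1,3)])
  have sb: "summable (\<lambda>m. norm (b m))" unfolding b_def c_def by (rule trans_summable[OF assms(2,4)])
  have "transition S A t x y * transition T B t u v = (\<Sum>k. a k) * (\<Sum>k. b k)"
    unfolding transition_def a_def b_def c_def ..
  also have "\<dots> = (\<Sum>k. \<Sum>i\<le>k. a i * b (k - i))" by (rule Cauchy_product[OF sa sb])
  also have "\<dots> = transition (S \<times> T) (pa A B) t (x,u) (y,v)"
    unfolding transition_def
  proof (rule suminf_cong)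
    fix k
    have "(\<Sum>i\<le>k. a i * b (k - i)) = (\<Sum>i\<le>k. c ^ k / of_nat (fact k) *
            complex_of_real (real (k choose i) * mpow S A i y x * mpow T B (k - i) v u))"
    proof (rule sum.cong[OF refl])
      fix i assume "i \<in> {..k}"
      then have ik: "i \<le> k" by simp
      have bf: "(of_nat (k choose i) :: complex) = fact k / (fact i * fact (k - i))"
        by (rule binomial_fact[OF ik])
      have ck: "c ^ k = c ^ i * c ^ (k - i)" using ik by (simp add: power_add[symmetric])
      show "a i * b (k - i) = c ^ k / of_nat (fact k) *
            complex_of_real (real (k choose i) * mpow S A i y x * mpow T B (k - i) v u)"
        unfolding a_def b_def using bf ck by (simp add: field_simps)
    qed
    also have "\<dots> = c ^ k / of_nat (fact k) * complex_of_real (mpow (S \<times> T) (pa A B) k (y,v) (x,u))"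
      by (simp add: mpow_pair[OF assms] sum_distrib_left)
    finally show "(\<Sum>i\<le>k. a i * b (k - i)) = (- \<i> * complex_of_real t) ^ k / of_nat (fact k) * complex_of_real (mpow (S \<times> T) (pa A B) k (y,v) (x,u))"
      unfolding c_def .
  qed
  finally show ?thesis ..
qed

lemma mpow_bij:
  assumes "bij_betw f S S'" "\<And>x y. x \<in> S \<Longrightarrow> y \<in> S \<Longrightarrow> A' (f x) (f y) = A x y"
    "x \<in> S" "y \<in> S"
  shows "mpow S' A' m (f x) (f y) = mpow S A m x y"
  using assms(3)
proof (induction m arbitrary: x)
  case 0
  have "f x = f y \<longleftrightarrow> x = y" using assms(1,4) 0 by (metis bij_betw_iff_bijections)
  then show ?case by simp
next
  case (Suc m)
  have "mpow S' A' (Suc m) (f x) (f y) = (\<Sum>z\<in>f ` S. A' (f x) z * mpow S' A' m z (f y))"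
    using assms(1) by (simp add: bij_betw_def)
  also have "\<dots> = (\<Sum>z\<in>S. A' (f x) (f z) * mpow S' A' m (f z) (f y))"
    using assms(1) unfolding bij_betw_def by (metis (no_types, lifting) sum.reindex_cong)
  also have "\<dots> = mpow S A (Suc m) x y"
    using Suc assms(2) by simp
  finally show ?case .
qed

lemma transition_bij:
  assumes "bij_betw f S S'" "\<And>x y. x \<in> S \<Longrightarrow> y \<in> S \<Longrightarrow> A' (f x) (f y) = A x y"
    "x \<in> S" "y \<in> S"
  shows "transition S' A' t (f x) (f y) = transition S A t x y"
proof -
  have "\<And>m. mpow S' A' m (f y) (f x) = mpow S A m y x"
    by (rule mpow_bij[of f S S' A' A]) (use assms in auto)
  then show ?thesis unfolding transition_def by simp
qed

lemma prod_cell_eq: "prod_cell n Cs = cp_verts n (\<lambda>k. Cs ! k)"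
  unfolding prod_cell_def cp_verts_def by simp

lemma finite_cp_verts:
  assumes "\<forall>k<n. finite (F k)"
  shows "finite (cp_verts n F)"
proof -
  have "cp_verts n F \<subseteq> {xs. set xs \<subseteq> (\<Union>k<n. F k) \<and> length xs = n}"
    unfolding cp_verts_def by (force simp: in_set_conv_nth)
  moreover have "finite {xs. set xs \<subseteq> (\<Union>k<n. F k) \<and> length xs = n}"
    by (rule finite_lists_length_eq) (use assms in auto)
  ultimately show ?thesis by (rule finite_subset)
qed

lemma cp_verts_Suc_bij:
  "bij_betw (\<lambda>(xs,x). xs @ [x]) (cp_verts n F \<times> F n) (cp_verts (Suc n) F)"
proof (rule bij_betw_byWitness[where f'="\<lambda>xs. (take n xs, xs ! n)"])
  show "(\<lambda>(xs,x). xs @ [x]) ` (cp_verts n F \<times> F n) \<subseteq> cp_verts (Suc n) F"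
    by (auto simp: cp_verts_def nth_append less_Suc_eq)
  show "(\<lambda>xs. (take n xs, xs ! n)) ` cp_verts (Suc n) F \<subseteq> cp_verts n F \<times> F n"
    by (auto simp: cp_verts_def)
  show "\<forall>p \<in> cp_verts n F \<times> F n. (take n (case p of (xs, x) \<Rightarrow> xs @ [x]), (case p of (xs, x) \<Rightarrow> xs @ [x]) ! n) = p"
    by (auto simp: cp_verts_def)
  show "\<forall>ys \<in> cp_verts (Suc n) F. (case (take n ys, ys ! n) of (xs, x) \<Rightarrow> xs @ [x]) = ys"
    by (auto simp: cp_verts_def take_Suc_conv_app_nth[symmetric])
qed

lemma card_cp_verts:
  assumes "\<forall>k<n. finite (F k)"
  shows "card (cp_verts n F) = (\<Prod>k<n. card (F k))"
  using assms
proof (induction n)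
  case 0
  have "cp_verts 0 F = {[]}" by (auto simp: cp_verts_def)
  then show ?case by simp
next
  case (Suc n)
  have "card (cp_verts (Suc n) F) = card (cp_verts n F \<times> F n)"
    using bij_betw_same_card[OF cp_verts_Suc_bij[of n F]] by simp
  also have "\<dots> = card (cp_verts n F) * card (F n)" by (simp add: card_cartesian_product)
  finally show ?case using Suc by simp
qed

lemma cp_adj_snoc:
  assumes "length xs = n" "length ys = n"
  shows "cp_adj (Suc n) As (xs @ [x]) (ys @ [y]) = pa (cp_adj n As) (As n) (xs,x) (ys,y)"
proof -
  have eq: "(\<forall>j<n. xs ! j = ys ! j) \<longleftrightarrow> xs = ys" using assms by (simp add: list_eq_iff_nth_eq)
  have "cp_adj (Suc n) As (xs @ [x]) (ys @ [y])
     = (\<Sum>k<n. if (\<forall>j<Suc n. j \<noteq> k \<longrightarrow> (xs@[x]) ! j = (ys@[y]) ! j) then As k ((xs@[x]) ! k) ((ys@[y]) ! k) else 0)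
       + (if (\<forall>j<Suc n. j \<noteq> n \<longrightarrow> (xs@[x]) ! j = (ys@[y]) ! j) then As n ((xs@[x]) ! n) ((ys@[y]) ! n) else 0)"
    unfolding cp_adj_def by simp
  also have "(if (\<forall>j<Suc n. j \<noteq> n \<longrightarrow> (xs@[x]) ! j = (ys@[y]) ! j) then As n ((xs@[x]) ! n) ((ys@[y]) ! n) else 0)
     = (if (\<forall>j<n. xs ! j = ys ! j) then As n x y else 0)"
    using assms by (auto simp: nth_append less_Suc_eq)
  also have "(\<Sum>k<n. if (\<forall>j<Suc n. j \<noteq> k \<longrightarrow> (xs@[x]) ! j = (ys@[y]) ! j) then As k ((xs@[x]) ! k) ((ys@[y]) ! k) else 0)
     = (\<Sum>k<n. if (\<forall>j<Suc n. j \<noteq> k \<longrightarrow> (xs@[x]) ! j = (ys@[y]) ! j) then As k (xs ! k) (ys ! k) else 0)"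
    by (rule sum.cong[OF refl]) (use assms in \<open>auto simp: nth_append\<close>)
  also have "(\<Sum>k<n. if (\<forall>j<Suc n. j \<noteq> k \<longrightarrow> (xs@[x]) ! j = (ys@[y]) ! j) then As k (xs ! k) (ys ! k) else 0)
     = (\<Sum>k<n. if (\<forall>j<n. j \<noteq> k \<longrightarrow> xs ! j = ys ! j) then As k (xs ! k) (ys ! k) else 0) * (if x = y then 1 else 0)"
    unfolding sum_distrib_right
  proof (rule sum.cong[OF refl])
    fix k assume "k \<in> {..<n}"
    then have "(\<forall>j<Suc n. j \<noteq> k \<longrightarrow> (xs@[x]) ! j = (ys@[y]) ! j) \<longleftrightarrow> (\<forall>j<n. j \<noteq> k \<longrightarrow> xs ! j = ys ! j) \<and> x = y"
      using assms by (auto simp: nth_append less_Suc_eq)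
    then show "(if (\<forall>j<Suc n. j \<noteq> k \<longrightarrow> (xs@[x]) ! j = (ys@[y]) ! j) then As k (xs ! k) (ys ! k) else 0)
      = (if (\<forall>j<n. j \<noteq> k \<longrightarrow> xs ! j = ys ! j) then As k (xs ! k) (ys ! k) else 0) * (if x = y then 1 else 0)"
      by auto
  qed
  finally have "cp_adj (Suc n) As (xs @ [x]) (ys @ [y]) = 
     (\<Sum>k<n. if (\<forall>j<n. j \<noteq> k \<longrightarrow> xs ! j = ys ! j) then As k (xs ! k) (ys ! k) else 0) * (if x = y then 1 else 0)
     + (if (\<forall>j<n. xs ! j = ys ! j) then As n x y else 0)" .
  then show ?thesis unfolding pa_def cp_adj_def fst_conv snd_conv using eq by simp
qed

lemma transition_cp:
  assumes "\<forall>k<n. finite (F k)" "xs \<in> cp_verts n F" "ys \<in> cp_verts n F"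
  shows "transition (cp_verts n F) (cp_adj n As) t xs ys = (\<Prod>k<n. transition (F k) (As k) t (xs ! k) (ys ! k))"
  using assms
proof (induction n arbitrary: xs ys)
  case 0
  have xs: "xs = []" "ys = []" using 0 by (auto simp: cp_verts_def)
  have cv: "cp_verts 0 F = {[]}" by (auto simp: cp_verts_def)
  have mp: "mpow {[]} (cp_adj 0 As) m [] [] = (if m = 0 then 1 else 0)" for m
    by (cases m) (auto simp: cp_adj_def)
  have "(\<lambda>m. (- \<i> * complex_of_real t) ^ m / of_nat (fact m) * complex_of_real (mpow {[]} (cp_adj 0 As) m [] []))
     = (\<lambda>m. if m = 0 then (\<lambda>_. 1) m else 0)"
    by (rule ext) (simp add: mp)
  moreover have "(\<lambda>m. if m = 0 then (\<lambda>_. 1::complex) m else 0) sums 1"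
    using sums_single[of 0 "\<lambda>_. 1::complex"] by simp
  ultimately show ?case unfolding transition_def xs cv by (simp add: sums_iff)
next
  case (Suc n)
  have fin: "finite (cp_verts n F)" "finite (F n)" using Suc.prems(1) finite_cp_verts[of n F] by auto
  have dec: "zs = take n zs @ [zs ! n]" "take n zs \<in> cp_verts n F" "zs ! n \<in> F n"
    if "zs \<in> cp_verts (Suc n) F" for zs
    using that by (auto simp: cp_verts_def take_Suc_conv_app_nth[symmetric])
  let ?f = "\<lambda>(xs,x). xs @ [x]"
  have "transition (cp_verts (Suc n) F) (cp_adj (Suc n) As) t xs ys
      = transition (cp_verts (Suc n) F) (cp_adj (Suc n) As) t (?f (take n xs, xs ! n)) (?f (take n ys, ys ! n))"
    using dec[OF Suc.prems(2)] dec[OF Suc.prems(3)] by simp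
  also have "\<dots> = transition (cp_verts n F \<times> F n) (pa (cp_adj n As) (As n)) t (take n xs, xs ! n) (take n ys, ys ! n)"
    by (rule transition_bij[OF cp_verts_Suc_bij])
       (use dec[OF Suc.prems(2)] dec[OF Suc.prems(3)] in \<open>auto simp: cp_adj_snoc cp_verts_def\<close>)
  also have "\<dots> = transition (cp_verts n F) (cp_adj n As) t (take n xs) (take n ys) * transition (F n) (As n) t (xs ! n) (ys ! n)"
    by (rule transition_pair[OF fin]) (use dec[OF Suc.prems(3)] in auto)
  also have "\<dots> = (\<Prod>k<n. transition (F k) (As k) t (take n xs ! k) (take n ys ! k)) * transition (F n) (As n) t (xs ! n) (ys ! n)"
    using Suc.IH[of "take n xs" "take n ys"] Suc.prems dec[OF Suc.prems(2)] dec[OF Suc.prems(3)] by simp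
  also have "\<dots> = (\<Prod>k<Suc n. transition (F k) (As k) t (xs ! k) (ys ! k))"
    by simp
  finally show ?case .
qed

lemma part_facts:
  assumes "finite S" "is_partition S P"
  shows "finite P" "\<And>C. C \<in> P \<Longrightarrow> finite C \<and> C \<noteq> {} \<and> C \<subseteq> S \<and> card C > 0"
    "\<And>C D x. C \<in> P \<Longrightarrow> D \<in> P \<Longrightarrow> x \<in> C \<Longrightarrow> x \<in> D \<longleftrightarrow> C = D"
    "\<And>f. sum f S = (\<Sum>C\<in>P. sum f C)"
proof -
  have PS: "P \<subseteq> Pow S" using assms(2) unfolding is_partition_def by auto
  show fP: "finite P" using assms(1) PS by (meson finite_Pow_iff finite_subset)
  show cf: "\<And>C. C \<in> P \<Longrightarrow> finite C \<and> C \<noteq> {} \<and> C \<subseteq> S \<and> card C > 0"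
    using assms PS unfolding is_partition_def by (auto intro: finite_subset simp: card_gt_0_iff)
  show "\<And>C D x. C \<in> P \<Longrightarrow> D \<in> P \<Longrightarrow> x \<in> C \<Longrightarrow> x \<in> D \<longleftrightarrow> C = D"
    using assms(2) unfolding is_partition_def by blast
  show "\<And>f. sum f S = (\<Sum>C\<in>P. sum f C)"
  proof -
    fix f
    have "S = \<Union>P" using assms(2) unfolding is_partition_def by auto
    then show "sum f S = (\<Sum>C\<in>P. sum f C)"
      using sum.Union_disjoint[of P f] fP cf assms(2) unfolding is_partition_def
      by (simp add: comp_def)
  qed
qed

lemma quot_mpow_gen:
  assumes "finite S" "equitable S A P" "C \<in> P" "x \<in> C" "D \<in> P"
  shows "(\<Sum>y\<in>D. mpow S A m x y) / sqrt (card D) = mpow P (qadj A) m C D / sqrt (card C)"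
  using assms(3,4,5)
proof (induction m arbitrary: C x D)
  have ip: "is_partition S P" using assms(2) unfolding equitable_def by auto
  note pf = part_facts[OF assms(1) ip]
  case 0
  have "(\<Sum>y\<in>D. mpow S A 0 x y) = (if x \<in> D then 1 else 0)"
    using pf(2)[OF 0(3)] by simp
  then show ?case using pf(3)[OF 0(1,3,2)] by auto
next
  case (Suc m)
  have ip: "is_partition S P" using assms(2) unfolding equitable_def by auto
  note pf = part_facts[OF assms(1) ip]
  have xS: "x \<in> S" using pf(2)[OF Suc.prems(1)] Suc.prems(2) by auto
  have "(\<Sum>y\<in>D. mpow S A (Suc m) x y) / sqrt (card D) = (\<Sum>z\<in>S. A x z * ((\<Sum>y\<in>D. mpow S A m z y) / sqrt (card D)))"
    by (simp add: sum.swap[of _ D S] sum_distrib_left sum_divide_distrib)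
  also have "\<dots> = (\<Sum>C'\<in>P. \<Sum>z\<in>C'. A x z * ((\<Sum>y\<in>D. mpow S A m z y) / sqrt (card D)))"
    by (rule pf(4))
  also have "\<dots> = (\<Sum>C'\<in>P. (\<Sum>z\<in>C'. A x z) / sqrt (card C') * mpow P (qadj A) m C' D)"
  proof (rule sum.cong[OF refl])
    fix C' assume C': "C' \<in> P"
    have "(\<Sum>z\<in>C'. A x z * ((\<Sum>y\<in>D. mpow S A m z y) / sqrt (card D)))
        = (\<Sum>z\<in>C'. A x z * (mpow P (qadj A) m C' D / sqrt (card C')))"
      by (rule sum.cong[OF refl]) (use Suc.IH[OF C' _ Suc.prems(3)] in simp)
    then show "(\<Sum>z\<in>C'. A x z * ((\<Sum>y\<in>D. mpow S A m z y) / sqrt (card D))) = (\<Sum>z\<in>C'. A x z) / sqrt (card C') * mpow P (qadj A) m C' D"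
      by (simp add: sum_distrib_right sum_divide_distrib)
  qed
  also have "\<dots> = (\<Sum>C'\<in>P. qadj A C C' / sqrt (card C) * mpow P (qadj A) m C' D)"
  proof (rule sum.cong[OF refl])
    fix C' assume C': "C' \<in> P"
    define r where "r = (\<Sum>z\<in>C'. A x z)"
    have const: "\<And>v. v \<in> C \<Longrightarrow> (\<Sum>z\<in>C'. A v z) = r"
      using assms(2) Suc.prems(1,2) C' unfolding equitable_def r_def by blast
    have "(\<Sum>v\<in>C. \<Sum>z\<in>C'. A v z) = real (card C) * r" using const by simp
    moreover have c0: "card C > 0" "card C' > 0" using pf(2) Suc.prems(1) C' by auto
    ultimately have "qadj A C C' / sqrt (card C) = real (card C) * r / (sqrt (card C) * sqrt (card C') * sqrt (card C))"
      unfolding qadj_def by (simp add: real_sqrt_mult)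
    also have "\<dots> = r / sqrt (card C')"
      using c0 by (simp add: field_simps)
    finally show "(\<Sum>z\<in>C'. A x z) / sqrt (card C') * mpow P (qadj A) m C' D = qadj A C C' / sqrt (card C) * mpow P (qadj A) m C' D"
      unfolding r_def by simp
  qed
  also have "\<dots> = mpow P (qadj A) (Suc m) C D / sqrt (card C)"
    by (simp add: sum_divide_distrib)
  finally show ?case .
qed

lemma quot_transition:
  assumes "finite S" "equitable S A P" "{a} \<in> P" "{b} \<in> P"
  shows "transition P (qadj A) t {a} {b} = transition S A t a b"
proof -
  have "\<And>m. mpow P (qadj A) m {b} {a} = mpow S A m b a"
    using quot_mpow_gen[OF assms(1,2,4) _ assms(3)] by simp
  then show ?thesis unfolding transition_def by simp
qed

lemma per_k:
  assumes "k < n" "length x = n" "\<forall>j<n. finite (F j)"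
  shows "(\<Sum>z\<in>cp_verts n F. if (\<forall>j<n. j \<noteq> k \<longrightarrow> x ! j = z ! j) then g (z ! k) else 0)
       = (if \<forall>j<n. j \<noteq> k \<longrightarrow> x ! j \<in> F j then (\<Sum>w\<in>F k. g w) else 0)"
proof -
  have fin: "finite (cp_verts n F)" by (rule finite_cp_verts[OF assms(3)])
  have "(\<Sum>z\<in>cp_verts n F. if (\<forall>j<n. j \<noteq> k \<longrightarrow> x ! j = z ! j) then g (z ! k) else 0)
     = (\<Sum>z\<in>{z\<in>cp_verts n F. \<forall>j<n. j \<noteq> k \<longrightarrow> x ! j = z ! j}. g (z ! k))"
    by (rule sum.inter_filter[OF fin, symmetric])
  also have "\<dots> = (if \<forall>j<n. j \<noteq> k \<longrightarrow> x ! j \<in> F j then (\<Sum>w\<in>F k. g w) else 0)"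
  proof (cases "\<forall>j<n. j \<noteq> k \<longrightarrow> x ! j \<in> F j")
    case True
    have seteq: "{z\<in>cp_verts n F. \<forall>j<n. j \<noteq> k \<longrightarrow> x ! j = z ! j} = (\<lambda>w. x[k := w]) ` F k"
    proof (intro set_eqI iffI)
      fix z assume z: "z \<in> {z\<in>cp_verts n F. \<forall>j<n. j \<noteq> k \<longrightarrow> x ! j = z ! j}"
      then have "z = x[k := z ! k]" using assms(1,2)
        unfolding cp_verts_def list_eq_iff_nth_eq by (auto simp: nth_list_update)
      moreover have "z ! k \<in> F k" using z assms(1) by (auto simp: cp_verts_def)
      ultimately show "z \<in> (\<lambda>w. x[k := w]) ` F k" by blast
    next
      fix z assume "z \<in> (\<lambda>w. x[k := w]) ` F k"
      then obtain w where w: "w \<in> F k" "z = x[k := w]" by blast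
      then show "z \<in> {z\<in>cp_verts n F. \<forall>j<n. j \<noteq> k \<longrightarrow> x ! j = z ! j}"
        using True assms(1,2) by (auto simp: cp_verts_def nth_list_update)
    qed
    have inj: "inj_on (\<lambda>w. x[k := w]) (F k)"
      by (rule inj_onI) (metis assms(1,2) nth_list_update_eq)
    have "(\<Sum>z\<in>(\<lambda>w. x[k := w]) ` F k. g (z ! k)) = (\<Sum>w\<in>F k. g (x[k := w] ! k))"
      by (rule sum.reindex[OF inj, unfolded comp_def])
    also have "\<dots> = (\<Sum>w\<in>F k. g w)" using assms(1,2) by simp
    finally show ?thesis using True seteq by simp
  next
    case False
    have e: "{z\<in>cp_verts n F. \<forall>j<n. j \<noteq> k \<longrightarrow> x ! j = z ! j} = {}"
      using False by (auto simp: cp_verts_def)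
    show ?thesis using False by (simp only: e sum.empty if_False)
  qed
  finally show ?thesis .
qed

lemma row_sum:
  assumes "length x = n" "\<forall>j<n. finite (F j)"
  shows "(\<Sum>z\<in>cp_verts n F. cp_adj n As x z)
       = (\<Sum>k<n. if \<forall>j<n. j \<noteq> k \<longrightarrow> x ! j \<in> F j then (\<Sum>w\<in>F k. As k (x ! k) w) else 0)"
  unfolding cp_adj_def
  by (subst sum.swap) (rule sum.cong[OF refl], rule per_k, use assms in auto)

lemma eq_row:
  assumes "equitable S A P" "C \<in> P" "D \<in> P" "y \<in> C" "finite C"
  shows "(\<Sum>w\<in>D. A y w) = (\<Sum>v\<in>C. \<Sum>w\<in>D. A v w) / card C"
proof -
  have "\<And>v. v \<in> C \<Longrightarrow> (\<Sum>w\<in>D. A v w) = (\<Sum>w\<in>D. A y w)"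
    using assms unfolding equitable_def by blast
  then have "(\<Sum>v\<in>C. \<Sum>w\<in>D. A v w) = card C * (\<Sum>w\<in>D. A y w)" by simp
  moreover have "card C > 0" using assms(4,5) card_gt_0_iff by blast
  ultimately show ?thesis by simp
qed

definition Rr :: "nat \<Rightarrow> (nat \<Rightarrow> 'a \<Rightarrow> 'a \<Rightarrow> real) \<Rightarrow> 'a set list \<Rightarrow> 'a set list \<Rightarrow> real" where
  "Rr n A Cs Ds = (\<Sum>k<n. if \<forall>j<n. j \<noteq> k \<longrightarrow> Cs ! j = Ds ! j
      then (\<Sum>v\<in>Cs ! k. \<Sum>w\<in>Ds ! k. A k v w) / card (Cs ! k) else 0)"

locale prodset =
  fixes n :: nat and V :: "nat \<Rightarrow> 'a set" and A :: "nat \<Rightarrow> 'a \<Rightarrow> 'a \<Rightarrow> real" and P :: "nat \<Rightarrow> 'a set set"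
  assumes fin: "\<forall>k<n. finite (V k)" and eqk: "\<forall>k<n. equitable (V k) (A k) (P k)"
begin

lemma ip: "k < n \<Longrightarrow> is_partition (V k) (P k)" using eqk unfolding equitable_def by auto

lemma pf2: "k < n \<Longrightarrow> C \<in> P k \<Longrightarrow> finite C \<and> C \<noteq> {} \<and> C \<subseteq> V k \<and> card C > 0"
  using part_facts(2)[OF fin[rule_format] ip] by blast

lemma pf3: "k < n \<Longrightarrow> C \<in> P k \<Longrightarrow> D \<in> P k \<Longrightarrow> x \<in> C \<Longrightarrow> x \<in> D \<longleftrightarrow> C = D"
  using part_facts(3)[OF fin[rule_format] ip] by blast

lemma finP: "k < n \<Longrightarrow> finite (P k)"
  using part_facts(1)[OF fin[rule_format] ip] by blast

lemma prod_row:
  assumes "Cs \<in> cp_verts n P" "Ds \<in> cp_verts n P" "x \<in> prod_cell n Cs"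
  shows "(\<Sum>z\<in>prod_cell n Ds. cp_adj n A x z) = Rr n A Cs Ds"
proof -
  have Cs: "length Cs = n" "\<And>k. k < n \<Longrightarrow> Cs ! k \<in> P k" using assms(1) by (auto simp: cp_verts_def)
  have Ds: "length Ds = n" "\<And>k. k < n \<Longrightarrow> Ds ! k \<in> P k" using assms(2) by (auto simp: cp_verts_def)
  have x: "length x = n" "\<And>k. k < n \<Longrightarrow> x ! k \<in> Cs ! k" using assms(3) by (auto simp: prod_cell_def)
  have "(\<Sum>z\<in>prod_cell n Ds. cp_adj n A x z)
     = (\<Sum>k<n. if \<forall>j<n. j \<noteq> k \<longrightarrow> x ! j \<in> Ds ! j then (\<Sum>w\<in>Ds ! k. A k (x ! k) w) else 0)"
    unfolding prod_cell_eq by (rule row_sum) (use x Ds pf2 in auto)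
  also have "\<dots> = Rr n A Cs Ds"
    unfolding Rr_def
  proof (rule sum.cong[OF refl])
    fix k assume k: "k \<in> {..<n}"
    have c: "(\<forall>j<n. j \<noteq> k \<longrightarrow> x ! j \<in> Ds ! j) \<longleftrightarrow> (\<forall>j<n. j \<noteq> k \<longrightarrow> Cs ! j = Ds ! j)"
      using pf3 Cs Ds x by blast
    have "(\<Sum>w\<in>Ds ! k. A k (x ! k) w) = (\<Sum>v\<in>Cs ! k. \<Sum>w\<in>Ds ! k. A k v w) / card (Cs ! k)"
      by (rule eq_row[of "V k" "A k" "P k"]) (use k eqk Cs Ds x pf2 in auto)
    then show "(if \<forall>j<n. j \<noteq> k \<longrightarrow> x ! j \<in> Ds ! j then (\<Sum>w\<in>Ds ! k. A k (x ! k) w) else 0)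
      = (if \<forall>j<n. j \<noteq> k \<longrightarrow> Cs ! j = Ds ! j
      then (\<Sum>v\<in>Cs ! k. \<Sum>w\<in>Ds ! k. A k v w) / card (Cs ! k) else 0)" using c by (simp only:)
  qed
  finally show ?thesis .
qed

lemma cell_nonempty:
  assumes "Cs \<in> cp_verts n P"
  shows "\<exists>x. x \<in> prod_cell n Cs"
proof -
  have Cs: "length Cs = n" "\<And>k. k < n \<Longrightarrow> Cs ! k \<in> P k" using assms by (auto simp: cp_verts_def)
  have "map (\<lambda>k. SOME v. v \<in> Cs ! k) [0..<n] \<in> prod_cell n Cs"
    unfolding prod_cell_def using Cs pf2 by (auto intro: someI_ex simp: ex_in_conv)
  then show ?thesis by blast
qed

lemma prod_inj:
  assumes "Cs \<in> cp_verts n P" "Ds \<in> cp_verts n P" "x \<in> prod_cell n Cs" "x \<in> prod_cell n Ds"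
  shows "Cs = Ds"
proof -
  have Cs: "length Cs = n" "\<And>k. k < n \<Longrightarrow> Cs ! k \<in> P k" using assms(1) by (auto simp: cp_verts_def)
  have Ds: "length Ds = n" "\<And>k. k < n \<Longrightarrow> Ds ! k \<in> P k" using assms(2) by (auto simp: cp_verts_def)
  have "\<And>k. k < n \<Longrightarrow> Cs ! k = Ds ! k"
    using assms(3,4) pf3 Cs Ds unfolding prod_cell_def by blast
  then show ?thesis using Cs Ds by (simp add: list_eq_iff_nth_eq)
qed

lemma prod_bij: "bij_betw (prod_cell n) (cp_verts n P) (prod_partition n P)"
  unfolding bij_betw_def prod_partition_def
  using prod_inj cell_nonempty by (auto intro!: inj_onI) (metis)

lemma prod_partition_ok: "is_partition (cp_verts n V) (prod_partition n P)"
  unfolding is_partition_def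
proof (intro conjI ballI impI)
  fix C assume "C \<in> prod_partition n P"
  then show "C \<noteq> {}" using cell_nonempty unfolding prod_partition_def by auto
next
  show "\<Union> (prod_partition n P) = cp_verts n V"
  proof (intro set_eqI iffI)
    fix x assume "x \<in> \<Union> (prod_partition n P)"
    then obtain Cs where "Cs \<in> cp_verts n P" "x \<in> prod_cell n Cs" unfolding prod_partition_def by auto
    then show "x \<in> cp_verts n V" using pf2 unfolding cp_verts_def prod_cell_def by blast
  next
    fix x assume x: "x \<in> cp_verts n V"
    define Cs where "Cs = map (\<lambda>k. SOME C. C \<in> P k \<and> x ! k \<in> C) [0..<n]"
    have ex: "\<exists>C. C \<in> P k \<and> x ! k \<in> C" if "k < n" for k
      using ip[OF that] x that unfolding is_partition_def cp_verts_def by auto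
    have "Cs \<in> cp_verts n P" "x \<in> prod_cell n Cs"
      unfolding Cs_def cp_verts_def prod_cell_def using x ex
      by (auto simp: cp_verts_def intro: someI2_ex)
    then show "x \<in> \<Union> (prod_partition n P)" unfolding prod_partition_def by auto
  qed
next
  fix C D assume "C \<in> prod_partition n P" "D \<in> prod_partition n P" "C \<noteq> D"
  then show "C \<inter> D = {}" using prod_inj unfolding prod_partition_def by blast
qed

lemma prod_equitable: "equitable (cp_verts n V) (cp_adj n A) (prod_partition n P)"
  unfolding equitable_def
proof (intro conjI prod_partition_ok ballI)
  fix C D x y assume C: "C \<in> prod_partition n P" and D: "D \<in> prod_partition n P" and xy: "x \<in> C" "y \<in> C"
  obtain Cs where Cs: "Cs \<in> cp_verts n P" "C = prod_cell n Cs" using C unfolding prod_partition_def by auto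
  obtain Ds where Ds: "Ds \<in> cp_verts n P" "D = prod_cell n Ds" using D unfolding prod_partition_def by auto
  show "(\<Sum>z\<in>D. cp_adj n A x z) = (\<Sum>z\<in>D. cp_adj n A y z)"
    using prod_row[OF Cs(1) Ds(1)] xy Cs Ds by simp
qed

end

context prodset begin

lemma prod_qadj:
  assumes "Cs \<in> cp_verts n P" "Ds \<in> cp_verts n P"
  shows "cp_adj n (\<lambda>k. qadj (A k)) Cs Ds = qadj (cp_adj n A) (prod_cell n Cs) (prod_cell n Ds)"
proof -
  have Cs: "length Cs = n" "\<And>k. k < n \<Longrightarrow> Cs ! k \<in> P k" using assms(1) by (auto simp: cp_verts_def)
  have Ds: "length Ds = n" "\<And>k. k < n \<Longrightarrow> Ds ! k \<in> P k" using assms(2) by (auto simp: cp_verts_def)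
  have cardC: "card (prod_cell n Cs) = (\<Prod>k<n. card (Cs ! k))"
    unfolding prod_cell_eq by (rule card_cp_verts) (use Cs pf2 in auto)
  have cardD: "card (prod_cell n Ds) = (\<Prod>k<n. card (Ds ! k))"
    unfolding prod_cell_eq by (rule card_cp_verts) (use Ds pf2 in auto)
  have "(\<Sum>x\<in>prod_cell n Cs. \<Sum>z\<in>prod_cell n Ds. cp_adj n A x z) = real (card (prod_cell n Cs)) * Rr n A Cs Ds"
    using prod_row[OF assms] by simp
  then have "qadj (cp_adj n A) (prod_cell n Cs) (prod_cell n Ds)
     = (\<Sum>k<n. real (card (prod_cell n Cs)) * (if \<forall>j<n. j \<noteq> k \<longrightarrow> Cs ! j = Ds ! j
      then (\<Sum>v\<in>Cs ! k. \<Sum>w\<in>Ds ! k. A k v w) / card (Cs ! k) else 0)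
      / sqrt (real (card (prod_cell n Cs)) * real (card (prod_cell n Ds))))"
    unfolding qadj_def Rr_def by (simp add: sum_distrib_left sum_divide_distrib)
  also have "\<dots> = cp_adj n (\<lambda>k. qadj (A k)) Cs Ds"
    unfolding cp_adj_def
  proof (rule sum.cong[OF refl])
    fix k assume "k \<in> {..<n}"
    then have k: "k < n" by simp
    show "real (card (prod_cell n Cs)) * (if \<forall>j<n. j \<noteq> k \<longrightarrow> Cs ! j = Ds ! j
      then (\<Sum>v\<in>Cs ! k. \<Sum>w\<in>Ds ! k. A k v w) / card (Cs ! k) else 0)
      / sqrt (real (card (prod_cell n Cs)) * real (card (prod_cell n Ds)))
      = (if \<forall>j<n. j \<noteq> k \<longrightarrow> Cs ! j = Ds ! j then qadj (A k) (Cs ! k) (Ds ! k) else 0)"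
    proof (cases "\<forall>j<n. j \<noteq> k \<longrightarrow> Cs ! j = Ds ! j")
      case True
      define p where "p = (\<Prod>j\<in>{..<n} - {k}. card (Cs ! j))"
      have pD: "p = (\<Prod>j\<in>{..<n} - {k}. card (Ds ! j))" unfolding p_def
        by (rule prod.cong) (use True in auto)
      have pc: "card (prod_cell n Cs) = card (Cs ! k) * p"
        unfolding cardC p_def using k by (subst prod.remove[of _ k]) auto
      have pd: "card (prod_cell n Ds) = card (Ds ! k) * p"
        unfolding cardD pD using k by (subst prod.remove[of _ k]) auto
      have p0: "p > 0" unfolding p_def using pf2 Cs by (auto intro!: prod_pos)
      have c0: "card (Cs ! k) > 0" "card (Ds ! k) > 0" using pf2 Cs Ds k by auto
      define s where "s = (\<Sum>v\<in>Cs ! k. \<Sum>w\<in>Ds ! k. A k v w)"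
      define c where "c = real (card (Cs ! k))"
      define d where "d = real (card (Ds ! k))"
      define q where "q = real p"
      have pos: "c > 0" "d > 0" "q > 0" using c0 p0 unfolding c_def d_def q_def by auto
      have sq: "sqrt (c * q * (d * q)) = q * sqrt (c * d)"
      proof -
        have "c * q * (d * q) = q^2 * (c * d)" by (simp add: power2_eq_square algebra_simps)
        then show ?thesis using pos by (simp add: real_sqrt_mult)
      qed
      have "c * q * (s / c) / sqrt (c * q * (d * q)) = s / sqrt (c * d)"
        unfolding sq using pos by (simp add: field_simps)
      then show ?thesis using True unfolding qadj_def pc pd s_def c_def d_def q_def by simp
    next
      case False then show ?thesis by (simp only: if_False)
    qed
  qed
  finally show ?thesis ..
qed

end

theorem corollary1:
  fixes n :: nat and V :: "nat \<Rightarrow> 'a set" and E :: "nat \<Rightarrow> 'a \<Rightarrow> 'a \<Rightarrow> bool"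
    and a b :: "nat \<Rightarrow> 'a" and t :: real and P :: "nat \<Rightarrow> 'a set set"
  assumes "n \<ge> 1"
    and graphs: "\<forall>k<n. simple_graph (V k) (E k)"
    and transfer: "\<forall>k<n. pst (V k) (adj (E k)) (a k) (b k) t \<and> (a k = b k \<longrightarrow> t > 0)"
    and distinct: "\<exists>k<n. a k \<noteq> b k"
    and eq: "\<forall>k<n. equitable (V k) (adj (E k)) (P k)"
    and singletons: "\<forall>k<n. {a k} \<in> P k \<and> {b k} \<in> P k"
  shows "equitable (cp_verts n V) (cp_adj n (\<lambda>k. adj (E k))) (prod_partition n P)
    \<and> bij_betw (prod_cell n) (cp_verts n P) (prod_partition n P)
    \<and> (\<forall>Cs\<in>cp_verts n P. \<forall>Ds\<in>cp_verts n P.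
         cp_adj n (\<lambda>k. qadj (adj (E k))) Cs Ds
         = qadj (cp_adj n (\<lambda>k. adj (E k))) (prod_cell n Cs) (prod_cell n Ds))
    \<and> pst (cp_verts n P) (cp_adj n (\<lambda>k. qadj (adj (E k))))
          (map (\<lambda>k. {a k}) [0..<n]) (map (\<lambda>k. {b k}) [0..<n]) t
    \<and> pst (prod_partition n P) (qadj (cp_adj n (\<lambda>k. adj (E k))))
          (prod_cell n (map (\<lambda>k. {a k}) [0..<n])) (prod_cell n (map (\<lambda>k. {b k}) [0..<n])) t"
proof -
  have finV: "\<forall>k<n. finite (V k)" using graphs unfolding simple_graph_def by auto
  interpret prodset n V "\<lambda>k. adj (E k)" P
    by unfold_locales (use finV eq in auto)
  have c1: "equitable (cp_verts n V) (cp_adj n (\<lambda>k. adj (E k))) (prod_partition n P)"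
    by (rule prod_equitable)
  have c3: "\<forall>Cs\<in>cp_verts n P. \<forall>Ds\<in>cp_verts n P.
         cp_adj n (\<lambda>k. qadj (adj (E k))) Cs Ds
         = qadj (cp_adj n (\<lambda>k. adj (E k))) (prod_cell n Cs) (prod_cell n Ds)"
    using prod_qadj by blast
  have tk: "\<And>k. k < n \<Longrightarrow> cmod (transition (V k) (adj (E k)) t (a k) (b k)) = 1"
    "\<And>k. k < n \<Longrightarrow> a k \<in> V k \<and> b k \<in> V k"
    using transfer unfolding pst_def by auto
  have qt: "\<And>k. k < n \<Longrightarrow> transition (P k) (qadj (adj (E k))) t {a k} {b k} = transition (V k) (adj (E k)) t (a k) (b k)"
    by (rule quot_transition) (use finV eq singletons in auto)
  have maP: "map (\<lambda>k. {a k}) [0..<n] \<in> cp_verts n P" "map (\<lambda>k. {b k}) [0..<n] \<in> cp_verts n P"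
    using singletons by (auto simp: cp_verts_def)
  have maV: "map a [0..<n] \<in> cp_verts n V" "map b [0..<n] \<in> cp_verts n V"
    using tk(2) by (auto simp: cp_verts_def)
  have prodnorm: "cmod (\<Prod>k<n. transition (V k) (adj (E k)) t (a k) (b k)) = 1"
  proof -
    have "cmod (\<Prod>k<n. transition (V k) (adj (E k)) t (a k) (b k)) = (\<Prod>k<n. cmod (transition (V k) (adj (E k)) t (a k) (b k)))"
      by (rule prod_norm[symmetric])
    also have "\<dots> = (\<Prod>k<n. 1)" by (rule prod.cong) (auto simp: tk(1))
    finally show ?thesis by simp
  qed
  have c4: "pst (cp_verts n P) (cp_adj n (\<lambda>k. qadj (adj (E k))))
          (map (\<lambda>k. {a k}) [0..<n]) (map (\<lambda>k. {b k}) [0..<n]) t"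
  proof -
    have "transition (cp_verts n P) (cp_adj n (\<lambda>k. qadj (adj (E k)))) t (map (\<lambda>k. {a k}) [0..<n]) (map (\<lambda>k. {b k}) [0..<n])
        = (\<Prod>k<n. transition (P k) (qadj (adj (E k))) t (map (\<lambda>k. {a k}) [0..<n] ! k) (map (\<lambda>k. {b k}) [0..<n] ! k))"
      by (rule transition_cp) (use finP maP in auto)
    also have "\<dots> = (\<Prod>k<n. transition (V k) (adj (E k)) t (a k) (b k))"
      by (rule prod.cong) (auto simp: qt)
    finally show ?thesis unfolding pst_def using maP prodnorm by simp
  qed
  have cellg: "prod_cell n (map (\<lambda>k. {f k}) [0..<n]) = {map f [0..<n]}" for f :: "nat \<Rightarrow> 'a"
  proof (intro set_eqI iffI)
    fix x assume "x \<in> prod_cell n (map (\<lambda>k. {f k}) [0..<n])"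
    then have "length x = n" "\<forall>k<n. x ! k = f k" unfolding prod_cell_def by auto
    then have "x = map f [0..<n]" by (intro nth_equalityI) auto
    then show "x \<in> {map f [0..<n]}" by simp
  next
    fix x assume "x \<in> {map f [0..<n]}"
    then show "x \<in> prod_cell n (map (\<lambda>k. {f k}) [0..<n])" unfolding prod_cell_def by simp
  qed
  note cella = cellg[of a] and cellb = cellg[of b]
  have inpp: "{map a [0..<n]} \<in> prod_partition n P" "{map b [0..<n]} \<in> prod_partition n P"
    unfolding prod_partition_def cella[symmetric] cellb[symmetric] using maP by auto
  have c5: "pst (prod_partition n P) (qadj (cp_adj n (\<lambda>k. adj (E k))))
          (prod_cell n (map (\<lambda>k. {a k}) [0..<n])) (prod_cell n (map (\<lambda>k. {b k}) [0..<n])) t"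
  proof -
    have "transition (prod_partition n P) (qadj (cp_adj n (\<lambda>k. adj (E k)))) t {map a [0..<n]} {map b [0..<n]}
        = transition (cp_verts n V) (cp_adj n (\<lambda>k. adj (E k))) t (map a [0..<n]) (map b [0..<n])"
      by (rule quot_transition[OF finite_cp_verts[OF finV] c1 inpp])
    also have "\<dots> = (\<Prod>k<n. transition (V k) (adj (E k)) t (map a [0..<n] ! k) (map b [0..<n] ! k))"
      by (rule transition_cp) (use finV maV in auto)
    also have "\<dots> = (\<Prod>k<n. transition (V k) (adj (E k)) t (a k) (b k))"
      by (rule prod.cong) auto
    finally show ?thesis unfolding pst_def cella cellb using inpp prodnorm by simp
  qed
  show ?thesis using c1 prod_bij c3 c4 c5 by blast
qed

end
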